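(* Consider two symmetric platforms with common effective driver arrival rate $e>0$ and common abandonment rate $\beta>0$, static prices $\phi_1,\phi_2\in[0,\phi_h]$, and total passenger rate $\Lambda>0$. The (unique) Wardrop equilibrium under the QoS metric $\mathcal D$ is $$(\lambda_1,\lambda_2)=\Bigl(\frac{\Lambda f(\phi_2)}{f(\phi_1)+f(\phi_2)},\ \frac{\Lambda f(\phi_1)}{f(\phi_1)+f(\phi_2)}\Bigr).$$
   Context: $f:[0,\phi_h]\to(0,1]$ is strictly concave, strictly decreasing, differentiable, $f(0)=1$. For platform $i$ with passenger rate $\lambda_i$, $\mathcal D_i(\lambda_i)=\bigl(\sum_{n\ge0}\frac{e^n}{\prod_{a=1}^n(\lambda_i f(\phi_i)+a\beta)}\bigr)^{-1}$ is the stationary probability of no waiting driver. The Wardrop equilibrium under QoS $\mathcal D$ is $\lambda_1\in\arg\min_{\lambda\in[0,\Lambda]}(\mathcal D_1(\lambda)-\mathcal D_2(\Lambda-\lambda))^2$, $\lambda_2=\Lambda-\lambda_1$. *)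

theory Defs
  imports "HOL-Analysis.Analysis"
begin

text \<open>Stationary probability of no waiting driver on platform i with passenger rate lam,
  price phi, effective driver arrival rate e and abandonment rate beta.\<close>
definition QoS_D :: "(real \<Rightarrow> real) \<Rightarrow> real \<Rightarrow> real \<Rightarrow> real \<Rightarrow> real \<Rightarrow> real" where
  "QoS_D f e beta phi lam =
     inverse (\<Sum>n. e ^ n / (\<Prod>a = 1..n. lam * f phi + real a * beta))"

definition wardrop_D ::
  "(real \<Rightarrow> real) \<Rightarrow> real \<Rightarrow> real \<Rightarrow> real \<Rightarrow> real \<Rightarrow> real \<Rightarrow> real \<times> real \<Rightarrow> bool" where
  "wardrop_D f e beta phi1 phi2 Lam p \<longleftrightarrow>
     (let g = (\<lambda>l. (QoS_D f e beta phi1 l - QoS_D f e beta phi2 (Lam - l))\<^sup>2) in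
      fst p \<in> {0..Lam} \<and> (\<forall>l\<in>{0..Lam}. g (fst p) \<le> g l) \<and> snd p = Lam - fst p)"

definition strictly_concave_on :: "real set \<Rightarrow> (real \<Rightarrow> real) \<Rightarrow> bool" where
  "strictly_concave_on S f \<longleftrightarrow>
     (\<forall>x\<in>S. \<forall>y\<in>S. \<forall>t. x \<noteq> y \<and> 0 < t \<and> t < 1 \<longrightarrow>
        f (t * x + (1 - t) * y) > t * f x + (1 - t) * f y)"

end

theory Submission
  imports Defs
begin

definition tS :: "real \<Rightarrow> real \<Rightarrow> real \<Rightarrow> nat \<Rightarrow> real" where
  "tS e beta x n = e ^ n / (\<Prod>a = 1..n. x + real a * beta)"

lemma prod_ge:
  assumes "x \<ge> 0" "beta > 0"
  shows "(\<Prod>a = 1..n. x + real a * beta) \<ge> fact n * beta ^ n"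
proof -
  have "(\<Prod>a = 1..n. real a * beta) \<le> (\<Prod>a = 1..n. x + real a * beta)"
    by (rule prod_mono) (use assms in auto)
  moreover have "(\<Prod>a = 1..n. real a * beta) = fact n * beta ^ n"
    by (simp add: prod.distrib fact_prod)
  ultimately show ?thesis by simp
qed

lemma prod_pos:
  assumes "x \<ge> 0" "beta > 0"
  shows "(\<Prod>a = 1..n. x + real a * beta) > 0"
  by (rule prod_pos) (use assms in \<open>auto intro!: add_nonneg_pos\<close>)

lemma tS_bound:
  assumes "x \<ge> 0" "beta > 0" "e > 0"
  shows "norm (tS e beta x n) \<le> (e/beta) ^ n /\<^sub>R fact n"
proof -
  have p: "(\<Prod>a = 1..n. x + real a * beta) \<ge> fact n * beta ^ n"
    using prod_ge assms by blast
  have q: "fact n * beta ^ n > 0" using assms by simp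
  have "tS e beta x n \<ge> 0" unfolding tS_def using prod_pos[OF assms(1,2), of n] assms by simp
  moreover have "tS e beta x n \<le> e ^ n / (fact n * beta ^ n)"
    unfolding tS_def using p q assms prod_pos[OF assms(1,2), of n] by (intro divide_left_mono) auto
  moreover have "e ^ n / (fact n * beta ^ n) = (e/beta) ^ n /\<^sub>R fact n"
    by (simp add: power_divide field_simps)
  ultimately show ?thesis by simp
qed

lemma tS_summable:
  assumes "x \<ge> 0" "beta > 0" "e > 0"
  shows "summable (tS e beta x)"
  by (rule summable_comparison_test[OF _ sums_summable[OF exp_converges]])
     (use tS_bound[OF assms] in blast)

lemma tS_strict:
  assumes "0 \<le> x" "x < y" "beta > 0" "e > 0"
  shows "suminf (tS e beta y) < suminf (tS e beta x)"
proof -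
  have sx: "summable (tS e beta x)" and sy: "summable (tS e beta y)"
    using tS_summable assms by auto
  have le: "tS e beta y n \<le> tS e beta x n" for n
  proof -
    have "(\<Prod>a = 1..n. x + real a * beta) \<le> (\<Prod>a = 1..n. y + real a * beta)"
      by (rule prod_mono) (use assms in auto)
    then show ?thesis unfolding tS_def
      using prod_pos[of x beta n] assms
      by (intro divide_left_mono) auto
  qed
  have lt: "tS e beta y 1 < tS e beta x 1"
    unfolding tS_def using assms by (simp add: divide_strict_left_mono add_pos_nonneg)
  have "0 < suminf (\<lambda>n. tS e beta x n - tS e beta y n)"
    using suminf_pos_iff[OF summable_diff[OF sx sy]] le lt by force
  then show ?thesis using suminf_diff[OF sx sy] by simp
qed

lemma tS_inj:
  assumes "0 \<le> x" "0 \<le> y" "beta > 0" "e > 0"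
    and "suminf (tS e beta x) = suminf (tS e beta y)"
  shows "x = y"
  using tS_strict[of x y beta e] tS_strict[of y x beta e] assms
  by (cases "x < y"; cases "y < x") auto

lemma QoS_eq: "QoS_D f e beta phi lam = inverse (suminf (tS e beta (lam * f phi)))"
  unfolding QoS_D_def tS_def by simp

theorem lemma5:
  fixes f :: "real \<Rightarrow> real" and phi_h e beta Lam phi1 phi2 :: real
  assumes "phi_h > 0"
    and "f ` {0..phi_h} \<subseteq> {0<..1}"
    and "strictly_concave_on {0..phi_h} f"
    and "\<forall>x\<in>{0..phi_h}. \<forall>y\<in>{0..phi_h}. x < y \<longrightarrow> f y < f x"
    and "f differentiable_on {0..phi_h}"
    and "f 0 = 1"
    and "e > 0" and "beta > 0" and "Lam > 0"
    and "phi1 \<in> {0..phi_h}" and "phi2 \<in> {0..phi_h}"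
  shows "\<forall>p. wardrop_D f e beta phi1 phi2 Lam p \<longleftrightarrow>
           p = (Lam * f phi2 / (f phi1 + f phi2), Lam * f phi1 / (f phi1 + f phi2))"
proof -
  have f1: "f phi1 > 0" and f2: "f phi2 > 0" using assms(2,10,11) by (auto simp: image_subset_iff)
  define g where "g = (\<lambda>l. (QoS_D f e beta phi1 l - QoS_D f e beta phi2 (Lam - l))\<^sup>2)"
  define ls where "ls = Lam * f phi2 / (f phi1 + f phi2)"
  have ls_in: "ls \<in> {0..Lam}" unfolding ls_def using f1 f2 assms(9)
    by (auto simp: field_simps)
  have ls_eq: "ls * f phi1 = (Lam - ls) * f phi2" unfolding ls_def using f1 f2
    by (simp add: field_simps)
  have snd_eq: "Lam - ls = Lam * f phi1 / (f phi1 + f phi2)" unfolding ls_def using f1 f2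
    by (simp add: field_simps)
  have g0: "g ls = 0" unfolding g_def QoS_eq using ls_eq by simp
  have gnn: "g l \<ge> 0" for l unfolding g_def by simp
  have zero_iff: "g l = 0 \<Longrightarrow> l = ls" if "l \<in> {0..Lam}" for l
  proof -
    assume "g l = 0"
    then have "inverse (suminf (tS e beta (l * f phi1))) = inverse (suminf (tS e beta ((Lam - l) * f phi2)))"
      unfolding g_def QoS_eq by simp
    then have "suminf (tS e beta (l * f phi1)) = suminf (tS e beta ((Lam - l) * f phi2))"
      by simp
    then have "l * f phi1 = (Lam - l) * f phi2"
      by (rule tS_inj[rotated 4]) (use that f1 f2 assms(7,8) in auto)
    then have "l * (f phi1 + f phi2) = Lam * f phi2" by (simp add: algebra_simps)
    then show "l = ls" unfolding ls_def using f1 f2 by (simp add: field_simps)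
  qed
  show ?thesis
  proof (intro allI iffI)
    fix p assume "wardrop_D f e beta phi1 phi2 Lam p"
    then have a: "fst p \<in> {0..Lam}" "\<forall>l\<in>{0..Lam}. g (fst p) \<le> g l" "snd p = Lam - fst p"
      unfolding wardrop_D_def g_def Let_def by auto
    have "g (fst p) = 0" using a(2) ls_in g0 gnn[of "fst p"] by force
    then have "fst p = ls" using zero_iff a(1) by blast
    then show "p = (Lam * f phi2 / (f phi1 + f phi2), Lam * f phi1 / (f phi1 + f phi2))"
      using a(3) snd_eq ls_def by (metis prod.collapse)
  next
    fix p assume "p = (Lam * f phi2 / (f phi1 + f phi2), Lam * f phi1 / (f phi1 + f phi2))"
    then have "p = (ls, Lam - ls)" using snd_eq ls_def by simp
    then show "wardrop_D f e beta phi1 phi2 Lam p"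
      unfolding wardrop_D_def Let_def g_def[symmetric] using ls_in g0 gnn by auto
  qed
qed

end
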